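(* Let $K$ be a commutative ring with $1$, let $A$ be a $K$-algebra (associative, not necessarily commutative or with $1$), and let $B$ be a $K$-subalgebra of $A$ such that $A/B$ is a finitely presented $K$-module. Then $A$ is finitely generated as a $K$-algebra if and only if $B$ is finitely generated as a $K$-algebra.
   Context: A $K$-algebra is a structure that is simultaneously an associative ring (not necessarily with identity) and a $K$-module, with $K$-bilinear multiplication. It is finitely generated as a $K$-algebra if there is a finite subset $U$ such that the smallest $K$-subalgebra containing $U$ is the whole algebra. *)

theory Defs
  imports Main HOL.Modules
begin

definition K_algebra :: "('k::comm_ring_1 \<Rightarrow> 'a::ring \<Rightarrow> 'a) \<Rightarrow> bool" where
  "K_algebra scale \<longleftrightarrow> module scale \<and>
     (\<forall>r x y. scale r (x * y) = scale r x * y \<and> scale r (x * y) = x * scale r y)"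

definition K_subalgebra :: "('k::comm_ring_1 \<Rightarrow> 'a::ring \<Rightarrow> 'a) \<Rightarrow> 'a set \<Rightarrow> bool" where
  "K_subalgebra scale S \<longleftrightarrow> 0 \<in> S \<and>
     (\<forall>x\<in>S. \<forall>y\<in>S. x + y \<in> S \<and> x * y \<in> S) \<and>
     (\<forall>r. \<forall>x\<in>S. scale r x \<in> S)"

definition K_alg_generated :: "('k::comm_ring_1 \<Rightarrow> 'a::ring \<Rightarrow> 'a) \<Rightarrow> 'a set \<Rightarrow> 'a set" where
  "K_alg_generated scale U = \<Inter> {S. K_subalgebra scale S \<and> U \<subseteq> S}"

definition fin_gen_K_algebra :: "('k::comm_ring_1 \<Rightarrow> 'a::ring \<Rightarrow> 'a) \<Rightarrow> 'a set \<Rightarrow> bool" where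
  "fin_gen_K_algebra scale S \<longleftrightarrow>
     (\<exists>U. finite U \<and> U \<subseteq> S \<and> K_alg_generated scale U = S)"

text \<open>Relation module of the map K^n \<rightarrow> A/B, e_i \<mapsto> a_i + B; elements of K^n are
represented as functions nat \<Rightarrow> 'k vanishing outside {..<n}.\<close>
definition quot_relations ::
  "('k::comm_ring_1 \<Rightarrow> 'a::ring \<Rightarrow> 'a) \<Rightarrow> 'a set \<Rightarrow> nat \<Rightarrow> (nat \<Rightarrow> 'a) \<Rightarrow> (nat \<Rightarrow> 'k) set" where
  "quot_relations scale B n a =
     {c. (\<forall>i\<ge>n. c i = 0) \<and> (\<Sum>i<n. scale (c i) (a i)) \<in> B}"

text \<open>The quotient K-module A/B (A = the whole type) is finitely presented: there is a
surjection K^n \<rightarrow> A/B whose kernel is a finitely generated K-submodule of K^n.\<close>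
definition quot_fin_presented :: "('k::comm_ring_1 \<Rightarrow> 'a::ring \<Rightarrow> 'a) \<Rightarrow> 'a set \<Rightarrow> bool" where
  "quot_fin_presented scale B \<longleftrightarrow>
     (\<exists>n::nat. \<exists>a::nat \<Rightarrow> 'a.
        (\<forall>x. \<exists>c::nat \<Rightarrow> 'k. x - (\<Sum>i<n. scale (c i) (a i)) \<in> B) \<and>
        (\<exists>G::(nat \<Rightarrow> 'k) set. finite G \<and>
           quot_relations scale B n a = {(\<lambda>i. \<Sum>g\<in>G. f g * g i) | f. True}))"

end

theory Submission
  imports Defs
begin

lemma gen_sub: "K_subalgebra scale (K_alg_generated scale U)"
  unfolding K_alg_generated_def K_subalgebra_def by auto

lemma gen_sup: "U \<subseteq> K_alg_generated scale U"
  unfolding K_alg_generated_def by auto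

lemma gen_min: "K_subalgebra scale S \<Longrightarrow> U \<subseteq> S \<Longrightarrow> K_alg_generated scale U \<subseteq> S"
  unfolding K_alg_generated_def by auto

lemma gen_mono: "U \<subseteq> V \<Longrightarrow> K_alg_generated scale U \<subseteq> K_alg_generated scale V"
  unfolding K_alg_generated_def by auto

lemma sub_subspace: "K_algebra scale \<Longrightarrow> K_subalgebra scale S \<Longrightarrow> module.subspace scale S"
  unfolding K_algebra_def
  by (subst module.subspace_def) (auto simp: K_subalgebra_def)

fun words :: "'a::ring set \<Rightarrow> nat \<Rightarrow> 'a set" where
  "words Y 0 = Y"
| "words Y (Suc k) = {y * w | y w. y \<in> Y \<and> w \<in> words Y k}"

lemma words_mult: "u \<in> words Y j \<Longrightarrow> v \<in> words Y k \<Longrightarrow> u * v \<in> words Y (Suc (j + k))"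
proof (induction j arbitrary: u)
  case 0 then show ?case by auto
next
  case (Suc j)
  then obtain y w where "u = y * w" "y \<in> Y" "w \<in> words Y j" by auto
  have "w * v \<in> words Y (Suc (j + k))" using Suc.IH \<open>w \<in> words Y j\<close> Suc.prems(2) by blast
  then show ?case using \<open>u = y * w\<close> \<open>y \<in> Y\<close> by (auto simp: mult.assoc)
qed

lemma words_finite: "finite Y \<Longrightarrow> finite (words Y k)"
proof (induction k)
  case 0 then show ?case by simp
next
  case (Suc k)
  have "words Y (Suc k) = (\<lambda>(y,w). y * w) ` (Y \<times> words Y k)" by auto
  with Suc show ?case by simp
qed

lemma easy_dir:
  fixes scale :: "'k::comm_ring_1 \<Rightarrow> 'a::ring \<Rightarrow> 'a"
  assumes alg: "K_algebra scale" and KB: "K_subalgebra scale B"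
    and surj: "\<forall>x. \<exists>c::nat \<Rightarrow> 'k. x - (\<Sum>i<n. scale (c i) (a i)) \<in> B"
    and fg: "fin_gen_K_algebra scale B"
  shows "fin_gen_K_algebra scale (UNIV :: 'a set)"
proof -
  interpret module scale using alg unfolding K_algebra_def by blast
  obtain U where U: "finite U" "U \<subseteq> B" "K_alg_generated scale U = B"
    using fg unfolding fin_gen_K_algebra_def by blast
  define V where "V = U \<union> a ` {..<n}"
  let ?S = "K_alg_generated scale V"
  have sp: "subspace ?S" using sub_subspace[OF alg gen_sub] .
  have BS: "B \<subseteq> ?S" using U(3) gen_mono[of U V scale] V_def by auto
  have aS: "a i \<in> ?S" if "i < n" for i using gen_sup[of V scale] V_def that by auto
  have "x \<in> ?S" for x
  proof -
    obtain c where c: "x - (\<Sum>i<n. scale (c i) (a i)) \<in> B" using surj by blast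
    have "(\<Sum>i<n. scale (c i) (a i)) \<in> ?S"
      by (rule subspace_sum[OF sp]) (auto intro: subspace_scale[OF sp] aS)
    then have "x - (\<Sum>i<n. scale (c i) (a i)) + (\<Sum>i<n. scale (c i) (a i)) \<in> ?S"
      using c BS subspace_add[OF sp] by blast
    then show ?thesis by simp
  qed
  then show ?thesis unfolding fin_gen_K_algebra_def
    by (intro exI[of _ V]) (auto simp: V_def U(1))
qed


lemma hard_dir:
  fixes scale :: "'k::comm_ring_1 \<Rightarrow> 'a::ring \<Rightarrow> 'a"
  assumes alg: "K_algebra scale" and KB: "K_subalgebra scale B"
    and surj: "\<forall>x. \<exists>c::nat \<Rightarrow> 'k. x - (\<Sum>i<n. scale (c i) (a i)) \<in> B"
    and finG: "finite G"
    and rel: "quot_relations scale B n a = {(\<lambda>i. \<Sum>g\<in>G. f g * g i) | f. True}"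
    and fg: "fin_gen_K_algebra scale (UNIV :: 'a set)"
  shows "fin_gen_K_algebra scale B"
proof -
  interpret module scale using alg unfolding K_algebra_def by blast
  have sl: "scale r (x * y) = scale r x * y" "scale r (x * y) = x * scale r y" for r x y
    using alg unfolding K_algebra_def by blast+
  obtain Y where Y: "finite Y" "K_alg_generated scale Y = UNIV"
    using fg unfolding fin_gen_K_algebra_def by blast
  define Y' where "Y' = Y \<union> a ` {..<n}"
  have Y'fin: "finite Y'" using Y(1) Y'_def by simp
  define lin where "lin c = (\<Sum>i<n. scale (c i) (a i))" for c :: "nat \<Rightarrow> 'k"
  define M where "M = range lin"
  define cf where "cf x = (SOME c. x - lin c \<in> B)" for x
  have cfB: "x - lin (cf x) \<in> B" for x
  proof -
    have "\<exists>c. x - lin c \<in> B" using surj unfolding lin_def by blast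
    then show ?thesis unfolding cf_def by (rule someI_ex)
  qed
  define pr where "pr x = x - lin (cf x)" for x
  define T where "T = pr ` (words Y' 0 \<union> words Y' 1 \<union> words Y' 2) \<union> lin ` G"
  have Tfin: "finite T" unfolding T_def using words_finite[OF Y'fin, of 0] words_finite[OF Y'fin, of 1] words_finite[OF Y'fin, of 2] finG
    by (simp del: words.simps)
  have spB: "subspace B" using sub_subspace[OF alg KB] .
  have Grel: "g \<in> quot_relations scale B n a" if "g \<in> G" for g
  proof -
    have "g = (\<lambda>i. \<Sum>h\<in>G. (if h = g then 1 else 0) * h i)"
    proof
      fix i
      have "(\<Sum>h\<in>G. (if h = g then 1 else 0) * h i) = (\<Sum>h\<in>G. (if h = g then g i else 0))"
        by (rule sum.cong) auto
      also have "\<dots> = g i" using that finG by simp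
      finally show "g i = (\<Sum>h\<in>G. (if h = g then 1 else 0) * h i)" by simp
    qed
    then have "\<exists>f. g = (\<lambda>i. \<Sum>h\<in>G. f h * h i)" by (rule exI[of _ "\<lambda>h. if h = g then 1 else 0"])
    then show ?thesis using rel by simp
  qed
  have TB: "T \<subseteq> B"
  proof
    fix t assume "t \<in> T"
    then show "t \<in> B"
    proof (cases "t \<in> lin ` G")
      case True
      then obtain g where "g \<in> G" "t = lin g" by auto
      then show ?thesis using Grel[of g] unfolding quot_relations_def lin_def by auto
    next
      case False
      then show ?thesis using \<open>t \<in> T\<close> cfB unfolding T_def pr_def by auto
    qed
  qed
  define C where "C = K_alg_generated scale T"
  have KC: "K_subalgebra scale C" unfolding C_def by (rule gen_sub)
  have spC: "subspace C" using sub_subspace[OF alg KC] .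
  have CB: "C \<subseteq> B" unfolding C_def by (rule gen_min[OF KB TB])
  have TC: "T \<subseteq> C" unfolding C_def by (rule gen_sup)
  have CC: "x * y \<in> C" if "x \<in> C" "y \<in> C" for x y using KC that unfolding K_subalgebra_def by auto
  have lin_add: "lin c + lin d = lin (\<lambda>i. c i + d i)" for c d
    unfolding lin_def by (simp add: scale_left_distrib sum.distrib)
  have lin_scale: "scale r (lin c) = lin (\<lambda>i. r * c i)" for r c
    unfolding lin_def by (simp add: scale_sum_right)
  have lin_0: "lin (\<lambda>i. 0) = 0" unfolding lin_def by simp
  have spM: "subspace M"
    proof (rule subspaceI)
    show "0 \<in> M" unfolding M_def using lin_0 by (metis rangeI)
    show "x + y \<in> M" if "x \<in> M" "y \<in> M" for x y
      using that unfolding M_def by (auto simp: lin_add)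
    show "scale r x \<in> M" if "x \<in> M" for r x
      using that unfolding M_def by (auto simp: lin_scale)
  qed
  define D where "D = {c + m | c m. c \<in> C \<and> m \<in> M}"
  have spD: "subspace D"
  proof (rule subspaceI)
    show "0 \<in> D" unfolding D_def using subspace_0[OF spC] subspace_0[OF spM] by force
    show "x + y \<in> D" if xyD: "x \<in> D" "y \<in> D" for x y
    proof -
      obtain c m c' m' where "x = c + m" "y = c' + m'" "c \<in> C" "m \<in> M" "c' \<in> C" "m' \<in> M"
        using xyD unfolding D_def by blast
      then have "x + y = (c + c') + (m + m')" by (simp add: algebra_simps)
      then show ?thesis unfolding D_def
        using subspace_add[OF spC] subspace_add[OF spM] \<open>c \<in> C\<close> \<open>c' \<in> C\<close> \<open>m \<in> M\<close> \<open>m' \<in> M\<close> by blast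
    qed
    show "scale r x \<in> D" if xD: "x \<in> D" for r x
    proof -
      obtain c m where "x = c + m" "c \<in> C" "m \<in> M"
        using xD unfolding D_def by blast
      then have "scale r x = scale r c + scale r m" by (simp add: scale_right_distrib)
      then show ?thesis unfolding D_def
        using subspace_scale[OF spC] subspace_scale[OF spM] \<open>c \<in> C\<close> \<open>m \<in> M\<close> by blast
    qed
  qed
  have CD: "C \<subseteq> D" unfolding D_def using subspace_0[OF spM] by force
  have rightM: "x * m \<in> D" if hyp: "\<And>i. i < n \<Longrightarrow> x * a i \<in> D" "m \<in> M" for x m
  proof -
    obtain c where "m = lin c" using hyp(2) unfolding M_def by auto
    then have "x * m = (\<Sum>i<n. scale (c i) (x * a i))"
      unfolding lin_def by (simp add: sum_distrib_left sl(2)[symmetric])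
    then show ?thesis using hyp(1) by (auto intro!: subspace_sum[OF spD] subspace_scale[OF spD])
  qed
  have leftM: "m * x \<in> D" if hyp: "\<And>i. i < n \<Longrightarrow> a i * x \<in> D" "m \<in> M" for x m
  proof -
    obtain c where "m = lin c" using hyp(2) unfolding M_def by auto
    then have "m * x = (\<Sum>i<n. scale (c i) (a i * x))"
      unfolding lin_def by (simp add: sum_distrib_right sl(1)[symmetric])
    then show ?thesis using hyp(1) by (auto intro!: subspace_sum[OF spD] subspace_scale[OF spD])
  qed
  have base: "w \<in> D" if "w \<in> words Y' k" "k \<le> 2" for w k
  proof -
    have "k = 0 \<or> k = 1 \<or> k = 2" using that(2) by linarith
    then have "w \<in> words Y' 0 \<union> words Y' 1 \<union> words Y' 2" using that(1) by blast
    then have "pr w \<in> T" unfolding T_def by blast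
    moreover have "w = pr w + lin (cf w)" unfolding pr_def by simp
    ultimately show ?thesis unfolding D_def M_def using TC by blast
  qed
  have aY: "a i \<in> words Y' 0" if "i < n" for i using that Y'_def by simp
  have allW: "\<forall>w \<in> words Y' k. w \<in> D" for k
  proof (induction k rule: less_induct)
    case (less k)
    show ?case
    proof
      fix w assume w: "w \<in> words Y' k"
      show "w \<in> D"
      proof (cases "k \<le> 2")
        case True then show ?thesis using base w by blast
      next
        case False
        define k' where "k' = k - 2"
        have k: "k = Suc (Suc k')" "k' \<ge> 1" using False unfolding k'_def by arith+
        from w k obtain y1 w1 where "w = y1 * w1" "y1 \<in> Y'" "w1 \<in> words Y' (Suc k')" by auto
        then obtain y2 v where "w = y1 * (y2 * v)" "y2 \<in> Y'" "v \<in> words Y' k'" by auto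
        define u where "u = y1 * y2"
        have u1: "u \<in> words Y' 1" unfolding u_def using \<open>y1 \<in> Y'\<close> \<open>y2 \<in> Y'\<close> by auto
        have wuv: "w = u * v" unfolding u_def using \<open>w = y1 * (y2 * v)\<close> by (simp add: mult.assoc)
        have uD: "u \<in> D" using base[OF u1] by simp
        have "k' < k" using k by simp
        then have vD: "v \<in> D" using less.IH \<open>v \<in> words Y' k'\<close> by blast
        obtain cu mu where u: "u = cu + mu" "cu \<in> C" "mu \<in> M" using uD unfolding D_def by blast
        obtain cv mv where v: "v = cv + mv" "cv \<in> C" "mv \<in> M" using vD unfolding D_def by blast
        have ha: "u * a i \<in> D" if "i < n" for i
          using base[OF words_mult[OF u1 aY[OF that]]] by simp
        have hb: "a i * v \<in> D" if "i < n" for i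
          proof -
          have "Suc (0 + k') < k" using k by simp
          then show ?thesis using less.IH words_mult[OF aY[OF that] \<open>v \<in> words Y' k'\<close>] by blast
        qed
        have hc: "a i * mv \<in> D" if "i < n" for i
        proof (rule rightM[OF _ v(3)])
          fix j assume "j < n"
          show "a i * a j \<in> D" using base[OF words_mult[OF aY[OF that] aY[OF \<open>j < n\<close>]]] by simp
        qed
        have d1: "u * mv \<in> D" using rightM[OF ha v(3)] .
        have d2: "mu * v \<in> D" using leftM[OF hb u(3)] .
        have d3: "mu * mv \<in> D" using leftM[OF hc u(3)] .
        have d4: "cu * cv \<in> D" using CC[OF u(2) v(2)] CD by auto
        have "w = cu * cv + (mu * v - mu * mv) + u * mv"
proof -
          have "mu * v - mu * mv = mu * cv" using v(1) by (simp add: distrib_left)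
          then have "cu * cv + (mu * v - mu * mv) + u * mv = (cu + mu) * cv + u * mv"
            by (simp add: distrib_right)
          also have "\<dots> = u * (cv + mv)" using u(1) by (simp add: distrib_left)
          finally show ?thesis using wuv v(1) by simp
        qed
        then show ?thesis using d1 d2 d3 d4 subspace_add[OF spD] subspace_diff[OF spD] by presburger
      qed
    qed
  qed
  define Sp where "Sp = span (\<Union>k. words Y' k)"
  have SpD: "Sp \<subseteq> D" unfolding Sp_def using allW by (intro span_minimal spD) auto
  have spSp: "subspace Sp" unfolding Sp_def by simp
  have mulsub1: "subspace {x. x * y \<in> S}" if "subspace S" for S y
    using that unfolding subspace_def by (auto simp: distrib_right sl(1)[symmetric])
  have mulsub2: "subspace {y. x * y \<in> S}" if "subspace S" for S x
    using that unfolding subspace_def by (auto simp: distrib_left sl(2)[symmetric])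
  have SpW: "x * y \<in> Sp" if SpWh: "x \<in> Sp" "y \<in> (\<Union>k. words Y' k)" for x y
  proof -
    have "x \<in> {x. x * y \<in> Sp}"
      using SpWh(1) unfolding Sp_def
    proof (rule span_subspace_induct)
      show "subspace {x. x * y \<in> span (\<Union>k. words Y' k)}" by (rule mulsub1) simp
      fix x assume "x \<in> (\<Union>k. words Y' k)"
      then show "x \<in> {x. x * y \<in> span (\<Union>k. words Y' k)}"
      proof -
        obtain j where j: "x \<in> words Y' j" using \<open>x \<in> (\<Union>k. words Y' k)\<close> by (auto simp del: words.simps)
        obtain k where k: "y \<in> words Y' k" using SpWh(2) by (auto simp del: words.simps)
        have "x * y \<in> words Y' (Suc (j + k))" by (rule words_mult[OF j k])
        then have "x * y \<in> (\<Union>k. words Y' k)" by (auto simp del: words.simps)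
        then show ?thesis using span_base by blast
      qed
    qed
    then show ?thesis by simp
  qed
  have SpSp: "x * y \<in> Sp" if SpSh: "x \<in> Sp" "y \<in> Sp" for x y
  proof -
    have "y \<in> {y. x * y \<in> Sp}"
      using SpSh(2) unfolding Sp_def
    proof (rule span_subspace_induct)
      show "subspace {y. x * y \<in> span (\<Union>k. words Y' k)}" by (rule mulsub2) simp
      fix y assume "y \<in> (\<Union>k. words Y' k)"
      then show "y \<in> {y. x * y \<in> span (\<Union>k. words Y' k)}"
        using SpW[OF SpSh(1)] Sp_def by blast
    qed
    then show ?thesis by simp
  qed
  have KSp: "K_subalgebra scale Sp"
    unfolding K_subalgebra_def using spSp SpSp unfolding subspace_def by blast
  have "Y' \<subseteq> (\<Union>k. words Y' k)" using UN_upper[of 0 UNIV "words Y'"] by simp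
  then have "Y' \<subseteq> Sp" unfolding Sp_def using span_superset[of "\<Union>k. words Y' k"] by blast
  then have "K_alg_generated scale Y' \<subseteq> Sp" by (rule gen_min[OF KSp])
  moreover have "K_alg_generated scale Y \<subseteq> K_alg_generated scale Y'"
    by (rule gen_mono) (simp add: Y'_def)
  ultimately have allD: "x \<in> D" for x using Y(2) SpD by auto
  have BC: "B \<subseteq> C"
  proof
    fix b assume "b \<in> B"
    obtain c d where cd: "b = c + lin d" "c \<in> C" using allD[of b] unfolding D_def M_def by auto
    have "lin d = b - c" using cd by simp
    then have ldB: "lin d \<in> B" using subspace_diff[OF spB \<open>b \<in> B\<close>] CB cd(2) by auto
    define d' where "d' i = (if i < n then d i else 0)" for i
    have "lin d' = lin d" unfolding lin_def d'_def by simp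
    then have "d' \<in> quot_relations scale B n a" using ldB
      unfolding quot_relations_def lin_def d'_def by auto
    then obtain f where f: "d' = (\<lambda>i. \<Sum>g\<in>G. f g * g i)" using rel by auto
    have "lin d' = (\<Sum>i<n. \<Sum>g\<in>G. scale (f g) (scale (g i) (a i)))"
      unfolding lin_def f by (simp add: scale_sum_left)
    also have "\<dots> = (\<Sum>g\<in>G. scale (f g) (lin g))"
      unfolding lin_def by (subst sum.swap) (simp add: scale_sum_right)
    finally have "lin d' = (\<Sum>g\<in>G. scale (f g) (lin g))" .
    moreover have "lin g \<in> C" if "g \<in> G" for g using that TC T_def by auto
    ultimately have "lin d' \<in> C" by (auto intro!: subspace_sum[OF spC] subspace_scale[OF spC])
    then show "b \<in> C" using cd \<open>lin d' = lin d\<close> subspace_add[OF spC] by auto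
  qed
  show ?thesis unfolding fin_gen_K_algebra_def
    using Tfin TB BC CB C_def by (intro exI[of _ T]) auto
qed

theorem theorem1p5:
  fixes scale :: "'k::comm_ring_1 \<Rightarrow> 'a::ring \<Rightarrow> 'a"
    and B :: "'a set"
  assumes "K_algebra scale"
    and "K_subalgebra scale B"
    and "quot_fin_presented scale B"
  shows "fin_gen_K_algebra scale (UNIV :: 'a set) \<longleftrightarrow> fin_gen_K_algebra scale B"
proof -
  obtain n a G where s: "\<forall>x. \<exists>c. x - (\<Sum>i<n. scale (c i) (a i)) \<in> B"
    and G: "finite G" "quot_relations scale B n a = {(\<lambda>i. \<Sum>g\<in>G. f g * g i) | f. True}"
    using assms(3) unfolding quot_fin_presented_def by blast
  show ?thesis
    using easy_dir[OF assms(1,2) s] hard_dir[OF assms(1,2) s G] by blast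
qed

end
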